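(* Let $k$ be a field and $\mathsf{E}$ a left strictly locally finite $k$-linear category. Then the class of right $\mathsf{E}$-modules isomorphic to $\Upsilon_{\mathsf{E}^{op}}(\mathcal{N})$ for some locally finite right $\mathcal{C}_\mathsf{E}$-comodule $\mathcal{N}$ is closed under extensions in the category of right $\mathsf{E}$-modules (and in the category of locally finite right $\mathsf{E}$-modules): if $0\to L\to M\to N\to0$ is a short exact sequence of right $\mathsf{E}$-modules and $L,N$ belong to this class, then so does $M$.
   Context: A small $k$-linear category $\mathsf{E}$ has $k$-vector spaces $\operatorname{Hom}_\mathsf{E}(x,y)$, $k$-bilinear associative composition and identities with $\mathrm{id}_x\ne0$. A right $\mathsf{E}$-module is a $k$-linear functor $\mathsf{E}^{op}\to k\text{-Vect}$ (action maps $\operatorname{Hom}_\mathsf{E}(x,y)\otimes_kN(y)\to N(x)$); locally finite if all values are finite-dimensional. Write $x\preceq y$ if there are $n\ge1$ and objects $x=z_0,\dots,z_n=y$ with $\operatorname{Hom}_\mathsf{E}(z_{i-1},z_i)\neq0$ for all $i$; $x\prec y$ means $x\preceq y$ and not $y\preceq x$. $\mathsf{E}$ is locally finite if all Hom spaces are finite-dimensional and every $\{z:x\preceq z\preceq y\}$ is finite; left strictly locally finite if moreover for every $y$ there is a finite set $X_y$ of objects with $x\prec y$ for $x\in X_y$ such that every $f:z\to y$ with $z\prec y$ equals $\sum_{i=1}^nh_ig_i$ ($n\ge0$) with $g_i:z\to x_i$, $h_i:x_i\to y$, $x_i\in X_y$. $\mathcal{C}_\mathsf{E}=\bigoplus_{x,y}\mathcal{C}^{x,y}$,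 $\mathcal{C}^{x,y}=\operatorname{Hom}_\mathsf{E}(x,y)^*$; counit zero on $\mathcal{C}^{x,y}$ for $x\ne y$, evaluation at $\mathrm{id}_x$ on $\mathcal{C}^{x,x}$; comultiplication $\mathcal{C}^{x,y}\to\bigoplus_z\mathcal{C}^{x,z}\otimes\mathcal{C}^{z,y}$ dual to composition $g\otimes h\mapsto hg$. For a right comodule $(\mathcal{N},\nu:\mathcal{N}\to\mathcal{N}\otimes\mathcal{C}_\mathsf{E})$, $\varphi\cdot n=(\mathrm{id}\otimes\varphi)\nu(n)$. With $e_x$ evaluation at $\mathrm{id}_x$ on $\mathcal{C}^{x,x}$ (zero elsewhere) and $\mathrm{ev}_f$, for $f\in\operatorname{Hom}_\mathsf{E}(x,y)$, evaluation at $f$ on $\mathcal{C}^{x,y}$ (zero elsewhere): $\Upsilon_{\mathsf{E}^{op}}(\mathcal{N})(x)=e_x\cdot\mathcal{N}$ and $f$ acts $e_y\cdot\mathcal{N}\to e_x\cdot\mathcal{N}$ by $n\mapsto\mathrm{ev}_f\cdot n$. $\mathcal{N}$ is locally finite if $\Upsilon_{\mathsf{E}^{op}}(\mathcal{N})$ is. *)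

theory Defs
  imports Complex_Main "HOL-Library.Function_Algebras"
begin

definition fin_dim :: "('k::field \<Rightarrow> 'v::ab_group_add \<Rightarrow> 'v) \<Rightarrow> 'v set \<Rightarrow> bool" where
  "fin_dim sc S \<longleftrightarrow> (\<exists>B. finite B \<and> module.span sc B = S)"

definition lin_on :: "('k::field \<Rightarrow> 'v::ab_group_add \<Rightarrow> 'v) \<Rightarrow> ('k \<Rightarrow> 'u::ab_group_add \<Rightarrow> 'u)
    \<Rightarrow> 'v set \<Rightarrow> ('v \<Rightarrow> 'u) \<Rightarrow> bool" where
  "lin_on s1 s2 S f \<longleftrightarrow> (\<forall>x\<in>S. \<forall>y\<in>S. f (x + y) = f x + f y) \<and> (\<forall>c. \<forall>x\<in>S. f (s1 c x) = s2 c (f x))"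

text \<open>Objects: the set Ob. Morphisms x -> y: the subspace Hom x y of the ambient space 'a.
  cmp x y z h g is the composite h g of g : x -> y and h : y -> z.\<close>

record ('o, 'a, 'k) klincat =
  Ob :: "'o set"
  Hom :: "'o \<Rightarrow> 'o \<Rightarrow> 'a set"
  cmp :: "'o \<Rightarrow> 'o \<Rightarrow> 'o \<Rightarrow> 'a \<Rightarrow> 'a \<Rightarrow> 'a"
  ident :: "'o \<Rightarrow> 'a"
  msc :: "'k \<Rightarrow> 'a \<Rightarrow> 'a"

definition klin_cat :: "('o, 'a::ab_group_add, 'k::field) klincat \<Rightarrow> bool" where
  "klin_cat E \<longleftrightarrow> vector_space (msc E)
   \<and> (\<forall>x\<in>Ob E. \<forall>y\<in>Ob E. module.subspace (msc E) (Hom E x y))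
   \<and> (\<forall>x\<in>Ob E. ident E x \<in> Hom E x x \<and> ident E x \<noteq> 0)
   \<and> (\<forall>x\<in>Ob E. \<forall>y\<in>Ob E. \<forall>z\<in>Ob E. \<forall>g\<in>Hom E x y. \<forall>h\<in>Hom E y z.
        cmp E x y z h g \<in> Hom E x z)
   \<and> (\<forall>x\<in>Ob E. \<forall>y\<in>Ob E. \<forall>z\<in>Ob E. \<forall>g\<in>Hom E x y.
        lin_on (msc E) (msc E) (Hom E y z) (\<lambda>h. cmp E x y z h g))
   \<and> (\<forall>x\<in>Ob E. \<forall>y\<in>Ob E. \<forall>z\<in>Ob E. \<forall>h\<in>Hom E y z.
        lin_on (msc E) (msc E) (Hom E x y) (\<lambda>g. cmp E x y z h g))
   \<and> (\<forall>w\<in>Ob E. \<forall>x\<in>Ob E. \<forall>y\<in>Ob E. \<forall>z\<in>Ob E.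
        \<forall>f\<in>Hom E w x. \<forall>g\<in>Hom E x y. \<forall>h\<in>Hom E y z.
        cmp E w y z h (cmp E w x y g f) = cmp E w x z (cmp E x y z h g) f)
   \<and> (\<forall>x\<in>Ob E. \<forall>y\<in>Ob E. \<forall>f\<in>Hom E x y.
        cmp E x y y (ident E y) f = f \<and> cmp E x x y f (ident E x) = f)"

definition hom_nz :: "('o, 'a::ab_group_add, 'k) klincat \<Rightarrow> 'o \<Rightarrow> 'o \<Rightarrow> bool" where
  "hom_nz E x y \<longleftrightarrow> x \<in> Ob E \<and> y \<in> Ob E \<and> Hom E x y \<noteq> {0}"

definition obj_le :: "('o, 'a::ab_group_add, 'k) klincat \<Rightarrow> 'o \<Rightarrow> 'o \<Rightarrow> bool" where
  "obj_le E = (hom_nz E)\<^sup>+\<^sup>+"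

definition obj_less :: "('o, 'a::ab_group_add, 'k) klincat \<Rightarrow> 'o \<Rightarrow> 'o \<Rightarrow> bool" where
  "obj_less E x y \<longleftrightarrow> obj_le E x y \<and> \<not> obj_le E y x"

definition locally_finite_cat :: "('o, 'a::ab_group_add, 'k::field) klincat \<Rightarrow> bool" where
  "locally_finite_cat E \<longleftrightarrow>
     (\<forall>x\<in>Ob E. \<forall>y\<in>Ob E. fin_dim (msc E) (Hom E x y))
   \<and> (\<forall>x\<in>Ob E. \<forall>y\<in>Ob E. finite {z \<in> Ob E. obj_le E x z \<and> obj_le E z y})"

definition left_strictly_locally_finite :: "('o, 'a::ab_group_add, 'k::field) klincat \<Rightarrow> bool" where
  "left_strictly_locally_finite E \<longleftrightarrow> locally_finite_cat E \<and>
     (\<forall>y\<in>Ob E. \<exists>X. finite X \<and> X \<subseteq> Ob E \<and> (\<forall>x\<in>X. obj_less E x y) \<and>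
        (\<forall>z\<in>Ob E. obj_less E z y \<longrightarrow> (\<forall>f\<in>Hom E z y.
           \<exists>(n::nat) xs g h. (\<forall>i<n. xs i \<in> X \<and> g i \<in> Hom E z (xs i) \<and> h i \<in> Hom E (xs i) y)
             \<and> f = (\<Sum>i<n. cmp E z (xs i) y (h i) (g i)))))"

text \<open>A right module M: values Val M x (subspaces of 'w) and action
  Act M x y f : Val M y -> Val M x for f in Hom x y (m \<mapsto> m f).\<close>

record ('o, 'a, 'w) rmod =
  Val :: "'o \<Rightarrow> 'w set"
  Act :: "'o \<Rightarrow> 'o \<Rightarrow> 'a \<Rightarrow> 'w \<Rightarrow> 'w"

definition is_rmod :: "('o, 'a::ab_group_add, 'k::field) klincat \<Rightarrow> ('k \<Rightarrow> 'w::ab_group_add \<Rightarrow> 'w)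
    \<Rightarrow> ('o, 'a, 'w) rmod \<Rightarrow> bool" where
  "is_rmod E sc M \<longleftrightarrow> vector_space sc
   \<and> (\<forall>x\<in>Ob E. module.subspace sc (Val M x))
   \<and> (\<forall>x\<in>Ob E. \<forall>y\<in>Ob E. \<forall>f\<in>Hom E x y. \<forall>m\<in>Val M y. Act M x y f m \<in> Val M x)
   \<and> (\<forall>x\<in>Ob E. \<forall>y\<in>Ob E. \<forall>f\<in>Hom E x y. lin_on sc sc (Val M y) (Act M x y f))
   \<and> (\<forall>x\<in>Ob E. \<forall>y\<in>Ob E. \<forall>m\<in>Val M y. lin_on (msc E) sc (Hom E x y) (\<lambda>f. Act M x y f m))
   \<and> (\<forall>x\<in>Ob E. \<forall>m\<in>Val M x. Act M x x (ident E x) m = m)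
   \<and> (\<forall>x\<in>Ob E. \<forall>y\<in>Ob E. \<forall>z\<in>Ob E. \<forall>g\<in>Hom E x y. \<forall>h\<in>Hom E y z. \<forall>m\<in>Val M z.
        Act M x z (cmp E x y z h g) m = Act M x y g (Act M y z h m))"

definition locally_finite_rmod :: "('o, 'a::ab_group_add, 'k::field) klincat \<Rightarrow> ('k \<Rightarrow> 'w::ab_group_add \<Rightarrow> 'w)
    \<Rightarrow> ('o, 'a, 'w) rmod \<Rightarrow> bool" where
  "locally_finite_rmod E sc M \<longleftrightarrow> (\<forall>x\<in>Ob E. fin_dim sc (Val M x))"

definition rmod_hom :: "('o, 'a::ab_group_add, 'k::field) klincat
    \<Rightarrow> ('k \<Rightarrow> 'v::ab_group_add \<Rightarrow> 'v) \<Rightarrow> ('o, 'a, 'v) rmod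
    \<Rightarrow> ('k \<Rightarrow> 'w::ab_group_add \<Rightarrow> 'w) \<Rightarrow> ('o, 'a, 'w) rmod
    \<Rightarrow> ('o \<Rightarrow> 'v \<Rightarrow> 'w) \<Rightarrow> bool" where
  "rmod_hom E s1 M1 s2 M2 \<phi> \<longleftrightarrow>
     (\<forall>x\<in>Ob E. lin_on s1 s2 (Val M1 x) (\<phi> x) \<and> (\<forall>m\<in>Val M1 x. \<phi> x m \<in> Val M2 x))
   \<and> (\<forall>x\<in>Ob E. \<forall>y\<in>Ob E. \<forall>f\<in>Hom E x y. \<forall>m\<in>Val M1 y.
        \<phi> x (Act M1 x y f m) = Act M2 x y f (\<phi> y m))"

definition rmod_iso :: "('o, 'a::ab_group_add, 'k::field) klincat
    \<Rightarrow> ('k \<Rightarrow> 'v::ab_group_add \<Rightarrow> 'v) \<Rightarrow> ('o, 'a, 'v) rmod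
    \<Rightarrow> ('k \<Rightarrow> 'w::ab_group_add \<Rightarrow> 'w) \<Rightarrow> ('o, 'a, 'w) rmod
    \<Rightarrow> ('o \<Rightarrow> 'v \<Rightarrow> 'w) \<Rightarrow> bool" where
  "rmod_iso E s1 M1 s2 M2 \<phi> \<longleftrightarrow> rmod_hom E s1 M1 s2 M2 \<phi>
     \<and> (\<forall>x\<in>Ob E. bij_betw (\<phi> x) (Val M1 x) (Val M2 x))"

definition rmod_isomorphic :: "('o, 'a::ab_group_add, 'k::field) klincat
    \<Rightarrow> ('k \<Rightarrow> 'v::ab_group_add \<Rightarrow> 'v) \<Rightarrow> ('o, 'a, 'v) rmod
    \<Rightarrow> ('k \<Rightarrow> 'w::ab_group_add \<Rightarrow> 'w) \<Rightarrow> ('o, 'a, 'w) rmod \<Rightarrow> bool" where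
  "rmod_isomorphic E s1 M1 s2 M2 \<longleftrightarrow> (\<exists>\<phi>. rmod_iso E s1 M1 s2 M2 \<phi>)"

definition short_exact :: "('o, 'a::ab_group_add, 'k::field) klincat
    \<Rightarrow> ('k \<Rightarrow> 'l::ab_group_add \<Rightarrow> 'l) \<Rightarrow> ('o, 'a, 'l) rmod
    \<Rightarrow> ('k \<Rightarrow> 'm::ab_group_add \<Rightarrow> 'm) \<Rightarrow> ('o, 'a, 'm) rmod
    \<Rightarrow> ('k \<Rightarrow> 'n::ab_group_add \<Rightarrow> 'n) \<Rightarrow> ('o, 'a, 'n) rmod
    \<Rightarrow> ('o \<Rightarrow> 'l \<Rightarrow> 'm) \<Rightarrow> ('o \<Rightarrow> 'm \<Rightarrow> 'n) \<Rightarrow> bool" where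
  "short_exact E sL L sM M sN N i p \<longleftrightarrow>
     rmod_hom E sL L sM M i \<and> rmod_hom E sM M sN N p
   \<and> (\<forall>x\<in>Ob E. inj_on (i x) (Val L x)
        \<and> p x ` Val M x = Val N x
        \<and> i x ` Val L x = {m \<in> Val M x. p x m = 0})"

text \<open>C_E is the direct sum of the duals Hom(x,y)^*.  Since all Hom spaces of a locally finite
  category are finite-dimensional, N \<otimes> Hom(x,y)^* is canonically the space of linear maps
  Hom(x,y) -> N, and N \<otimes> C^{x,z} \<otimes> C^{z',y} the space of bilinear maps
  Hom(x,z) \<times> Hom(z',y) -> N.  Accordingly a right comodule (N, \<nu>) is given by its carrier
  Car (a subspace of 'c) and Coact n x y f = (id \<otimes> ev_f)(\<nu> n) for f in Hom x y.\<close>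

record ('o, 'a, 'c) rcomod =
  Car :: "'c set"
  Coact :: "'c \<Rightarrow> 'o \<Rightarrow> 'o \<Rightarrow> 'a \<Rightarrow> 'c"

definition is_rcomod :: "('o, 'a::ab_group_add, 'k::field) klincat \<Rightarrow> ('k \<Rightarrow> 'c::ab_group_add \<Rightarrow> 'c)
    \<Rightarrow> ('o, 'a, 'c) rcomod \<Rightarrow> bool" where
  "is_rcomod E sc N \<longleftrightarrow> vector_space sc
   \<and> module.subspace sc (Car N)
   \<comment> \<open>\<nu> : N -> N \<otimes> C_E is a well-defined linear map\<close>
   \<and> (\<forall>n\<in>Car N. \<forall>x\<in>Ob E. \<forall>y\<in>Ob E. \<forall>f\<in>Hom E x y. Coact N n x y f \<in> Car N)
   \<and> (\<forall>x\<in>Ob E. \<forall>y\<in>Ob E. \<forall>f\<in>Hom E x y. lin_on sc sc (Car N) (\<lambda>n. Coact N n x y f))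
   \<and> (\<forall>n\<in>Car N. \<forall>x\<in>Ob E. \<forall>y\<in>Ob E. lin_on (msc E) sc (Hom E x y) (Coact N n x y))
   \<and> (\<forall>n\<in>Car N. finite {(x, y). x \<in> Ob E \<and> y \<in> Ob E \<and> (\<exists>f\<in>Hom E x y. Coact N n x y f \<noteq> 0)})
   \<comment> \<open>counit: (id \<otimes> \<epsilon>) \<nu> = id\<close>
   \<and> (\<forall>n\<in>Car N. (\<Sum>x\<in>{x \<in> Ob E. Coact N n x x (ident E x) \<noteq> 0}. Coact N n x x (ident E x)) = n)
   \<comment> \<open>coassociativity: (\<nu> \<otimes> id) \<nu> = (id \<otimes> \<Delta>) \<nu>, componentwise\<close>
   \<and> (\<forall>n\<in>Car N. \<forall>x\<in>Ob E. \<forall>z\<in>Ob E. \<forall>z'\<in>Ob E. \<forall>y\<in>Ob E. \<forall>g\<in>Hom E x z. \<forall>h\<in>Hom E z' y.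
        Coact N (Coact N n z' y h) x z g = (if z = z' then Coact N n x y (cmp E x z y h g) else 0))"

text \<open>The functor Upsilon: Upsilon(N)(x) = e_x \<cdot> N, and f : x -> y acts by n \<mapsto> ev_f \<cdot> n.\<close>

definition Upsilon :: "('o, 'a::ab_group_add, 'k::field) klincat \<Rightarrow> ('o, 'a, 'c) rcomod \<Rightarrow> ('o, 'a, 'c) rmod" where
  "Upsilon E N = \<lparr> Val = (\<lambda>x. (\<lambda>n. Coact N n x x (ident E x)) ` Car N),
                   Act = (\<lambda>x y f n. Coact N n x y f) \<rparr>"

definition locally_finite_rcomod :: "('o, 'a::ab_group_add, 'k::field) klincat \<Rightarrow> ('k \<Rightarrow> 'c::ab_group_add \<Rightarrow> 'c)
    \<Rightarrow> ('o, 'a, 'c) rcomod \<Rightarrow> bool" where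
  "locally_finite_rcomod E sc N \<longleftrightarrow> locally_finite_rmod E sc (Upsilon E N)"

text \<open>M is isomorphic to Upsilon(N) for a locally finite right C_E-comodule N whose underlying
  space lives in the type 'c (the type is fixed by the itself-argument).\<close>

definition in_Upsilon_class :: "('o, 'a::ab_group_add, 'k::field) klincat \<Rightarrow> ('k \<Rightarrow> 'w::ab_group_add \<Rightarrow> 'w)
    \<Rightarrow> ('o, 'a, 'w) rmod \<Rightarrow> 'c::ab_group_add itself \<Rightarrow> bool" where
  "in_Upsilon_class E sc M _ \<longleftrightarrow> (\<exists>(scN :: 'k \<Rightarrow> 'c \<Rightarrow> 'c) (N :: ('o, 'a, 'c) rcomod).
      is_rcomod E scN N \<and> locally_finite_rcomod E scN N
      \<and> rmod_isomorphic E sc M scN (Upsilon E N))"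

end

theory Submission
  imports Defs
begin

lemma lin_on_zero:
  assumes "module s1" "module.subspace s1 S" "lin_on s1 s2 S f"
  shows "f 0 = 0"
proof -
  have "0 \<in> S" using assms by (simp add: module.subspace_def)
  moreover have "\<forall>x\<in>S. \<forall>y\<in>S. f (x + y) = f x + f y" using assms(3) by (simp add: lin_on_def)
  ultimately have "f (0 + 0) = f 0 + f 0" by blast
  then show ?thesis by simp
qed

lemma lin_on_diff:
  assumes "module s1" "module.subspace s1 S" "lin_on s1 s2 S f" "a \<in> S" "b \<in> S"
  shows "f (a - b) = f a - f b"
proof -
  have "a - b \<in> S" using assms by (simp add: module.subspace_diff)
  moreover have "\<forall>x\<in>S. \<forall>y\<in>S. f (x + y) = f x + f y" using assms(3) by (simp add: lin_on_def)
  ultimately have "f (a - b + b) = f (a - b) + f b" using assms(5) by blast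
  then show ?thesis by (simp add: algebra_simps)
qed

lemma lin_on_sum_plain:
  assumes "module s1" "module.subspace s1 S" "lin_on s1 s2 S f" "\<forall>c\<in>t. v c \<in> S"
  shows "f (\<Sum>c\<in>t. v c) = (\<Sum>c\<in>t. f (v c))"
  using assms(4)
proof (induction t rule: infinite_finite_induct)
  case (infinite A) then show ?case using lin_on_zero[OF assms(1-3)] by simp
next
  case empty then show ?case using lin_on_zero[OF assms(1-3)] by simp
next
  case (insert x F)
  have add: "\<forall>a\<in>S. \<forall>b\<in>S. f (a + b) = f a + f b" using assms(3) by (simp add: lin_on_def)
  have F: "(\<Sum>c\<in>F. v c) \<in> S" by (rule module.subspace_sum[OF assms(1,2)]) (use insert.prems in blast)
  have vx: "v x \<in> S" using insert.prems by blast
  have IH: "f (\<Sum>c\<in>F. v c) = (\<Sum>c\<in>F. f (v c))" using insert.IH insert.prems by blast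
  have "f (\<Sum>c\<in>insert x F. v c) = f (v x + (\<Sum>c\<in>F. v c))" using insert.hyps by simp
  also have "\<dots> = f (v x) + f (\<Sum>c\<in>F. v c)" using add F vx by blast
  also have "\<dots> = (\<Sum>c\<in>insert x F. f (v c))" using IH insert.hyps by simp
  finally show ?case .
qed

lemma lin_on_sum:
  assumes "module s1" "module s2" "module.subspace s1 S" "lin_on s1 s2 S f" "\<forall>c\<in>t. v c \<in> S"
  shows "f (\<Sum>c\<in>t. s1 (r c) (v c)) = (\<Sum>c\<in>t. s2 (r c) (f (v c)))"
proof -
  have "\<forall>c\<in>t. s1 (r c) (v c) \<in> S" using assms(5) module.subspace_scale[OF assms(1,3)] by blast
  then have "f (\<Sum>c\<in>t. s1 (r c) (v c)) = (\<Sum>c\<in>t. f (s1 (r c) (v c)))"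
    by (rule lin_on_sum_plain[OF assms(1,3,4)])
  also have "\<dots> = (\<Sum>c\<in>t. s2 (r c) (f (v c)))"
  proof (rule sum.cong)
    fix c assume "c \<in> t"
    then have "v c \<in> S" using assms(5) by blast
    moreover have "\<forall>c. \<forall>x\<in>S. f (s1 c x) = s2 c (f x)" using assms(4) by (simp add: lin_on_def)
    ultimately show "f (s1 (r c) (v c)) = s2 (r c) (f (v c))" by blast
  qed simp
  finally show ?thesis .
qed

lemma fin_dim_iso:
  assumes vs1: "vector_space s1" and vs2: "vector_space s2"
    and sub: "module.subspace s1 S" and lin: "lin_on s1 s2 S \<phi>"
    and bij: "bij_betw \<phi> S T" and fd: "fin_dim s2 T"
  shows "fin_dim s1 S"
proof -
  have m1: "module s1" and m2: "module s2" using vs1 vs2 by (simp_all add: module_iff_vector_space)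
  obtain B where B: "finite B" "module.span s2 B = T" using fd unfolding fin_dim_def by blast
  define \<psi> where "\<psi> = inv_into S \<phi>"
  have BT: "B \<subseteq> T" using B(2) module.span_superset[OF m2, of B] by simp
  have inj: "inj_on \<phi> S" and img: "\<phi> ` S = T" using bij unfolding bij_betw_def by blast+
  have psi: "\<psi> b \<in> S \<and> \<phi> (\<psi> b) = b" if "b \<in> T" for b
  proof
    show "\<psi> b \<in> S" unfolding \<psi>_def using that img inv_into_into by metis
    show "\<phi> (\<psi> b) = b" unfolding \<psi>_def using that img f_inv_into_f by metis
  qed
  have psiB: "\<psi> ` B \<subseteq> S" using psi BT by blast
  have "S = module.span s1 (\<psi> ` B)"
  proof
    show "module.span s1 (\<psi> ` B) \<subseteq> S"
      by (rule module.span_minimal[OF m1 psiB sub])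
  next
    show "S \<subseteq> module.span s1 (\<psi> ` B)"
    proof
      fix s assume s: "s \<in> S"
      then have "\<phi> s \<in> module.span s2 B" using img B(2) by blast
      then obtain t r where tr: "finite t" "t \<subseteq> B" "\<phi> s = (\<Sum>a\<in>t. s2 (r a) a)"
        unfolding module.span_explicit[OF m2] by blast
      define s' where "s' = (\<Sum>a\<in>t. s1 (r a) (\<psi> a))"
      have tS: "\<forall>a\<in>t. \<psi> a \<in> S" using tr(2) psiB by blast
      have s'S: "s' \<in> S" unfolding s'_def
        apply (rule module.subspace_sum[OF m1 sub])
        apply (rule module.subspace_scale[OF m1 sub])
        using tS by blast
      have "\<phi> s' = (\<Sum>a\<in>t. s2 (r a) (\<phi> (\<psi> a)))"
        unfolding s'_def by (rule lin_on_sum[OF m1 m2 sub lin tS])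
      also have "\<dots> = (\<Sum>a\<in>t. s2 (r a) a)"
      proof (rule sum.cong)
        fix a assume "a \<in> t" then have "a \<in> T" using tr(2) BT by blast
        then show "s2 (r a) (\<phi> (\<psi> a)) = s2 (r a) a" using psi by simp
      qed simp
      finally have "\<phi> s' = \<phi> s" using tr(3) by simp
      then have "s' = s" using inj s s'S unfolding inj_on_def by blast
      moreover have "s' \<in> module.span s1 (\<psi> ` B)" unfolding s'_def
        apply (rule module.span_sum[OF m1])
        apply (rule module.span_scale[OF m1])
        apply (rule module.span_base[OF m1])
        using tr by blast
      ultimately show "s \<in> module.span s1 (\<psi> ` B)" by simp
    qed
  qed
  then show ?thesis using B(1) unfolding fin_dim_def by blast
qed

lemma subspace_image:
  assumes "module s1" "module s2" "module.subspace s1 S" "lin_on s1 s2 S \<phi>"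
  shows "module.subspace s2 (\<phi> ` S)"
proof -
  have z: "\<phi> 0 = 0" using lin_on_zero assms by blast
  have S: "0 \<in> S" "\<forall>x\<in>S. \<forall>y\<in>S. x + y \<in> S" "\<forall>c. \<forall>x\<in>S. s1 c x \<in> S"
    using assms(3) unfolding module.subspace_def[OF assms(1)] by blast+
  have L: "\<forall>x\<in>S. \<forall>y\<in>S. \<phi> (x + y) = \<phi> x + \<phi> y" "\<forall>c. \<forall>x\<in>S. \<phi> (s1 c x) = s2 c (\<phi> x)"
    using assms(4) unfolding lin_on_def by blast+
  show ?thesis unfolding module.subspace_def[OF assms(2)]
  proof (intro conjI ballI allI)
    show "0 \<in> \<phi> ` S" using z S(1) by (metis image_eqI)
  next
    fix a b assume "a \<in> \<phi> ` S" "b \<in> \<phi> ` S"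
    then obtain x y where "x \<in> S" "y \<in> S" "a = \<phi> x" "b = \<phi> y" by blast
    then show "a + b \<in> \<phi> ` S" using S(2) L(1) by (metis image_eqI)
  next
    fix c a assume "a \<in> \<phi> ` S"
    then obtain x where "x \<in> S" "a = \<phi> x" by blast
    then show "s2 c a \<in> \<phi> ` S" using S(3) L(2) by (metis image_eqI)
  qed
qed

lemma fin_dim_image:
  assumes vs1: "vector_space s1" and vs2: "vector_space s2"
    and sub: "module.subspace s1 S" and lin: "lin_on s1 s2 S \<phi>" and fd: "fin_dim s1 S"
  shows "fin_dim s2 (\<phi> ` S)"
proof -
  have m1: "module s1" and m2: "module s2" using vs1 vs2 by (simp_all add: module_iff_vector_space)
  obtain B where B: "finite B" "module.span s1 B = S" using fd unfolding fin_dim_def by blast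
  have BS: "B \<subseteq> S" using B(2) module.span_superset[OF m1, of B] by simp
  have "\<phi> ` S = module.span s2 (\<phi> ` B)"
  proof
    show "module.span s2 (\<phi> ` B) \<subseteq> \<phi> ` S"
      by (rule module.span_minimal[OF m2 _ subspace_image[OF m1 m2 sub lin]]) (use BS in blast)
  next
    show "\<phi> ` S \<subseteq> module.span s2 (\<phi> ` B)"
    proof
      fix u assume "u \<in> \<phi> ` S"
      then obtain s where s: "s \<in> S" "u = \<phi> s" by blast
      then have "s \<in> module.span s1 B" using B(2) by simp
      then obtain t r where tr: "finite t" "t \<subseteq> B" "s = (\<Sum>a\<in>t. s1 (r a) a)"
        unfolding module.span_explicit[OF m1] by blast
      have tS: "\<forall>a\<in>t. a \<in> S" using tr(2) BS by blast
      have "u = (\<Sum>a\<in>t. s2 (r a) (\<phi> a))"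
        unfolding s(2) tr(3) by (rule lin_on_sum[OF m1 m2 sub lin tS])
      also have "\<dots> \<in> module.span s2 (\<phi> ` B)"
        apply (rule module.span_sum[OF m2])
        apply (rule module.span_scale[OF m2])
        apply (rule module.span_base[OF m2])
        using tr by blast
      finally show "u \<in> module.span s2 (\<phi> ` B)" .
    qed
  qed
  then show ?thesis using B(1) unfolding fin_dim_def by blast
qed

definition msupp :: "('o, 'a::ab_group_add, 'k::field) klincat \<Rightarrow> ('o, 'a, 'w::ab_group_add) rmod \<Rightarrow> 'o \<Rightarrow> 'w \<Rightarrow> 'o set" where
  "msupp E M y m = {x \<in> Ob E. \<exists>f\<in>Hom E x y. Act M x y f m \<noteq> 0}"

definition fsupp :: "('o, 'a::ab_group_add, 'k::field) klincat \<Rightarrow> ('o, 'a, 'w::ab_group_add) rmod \<Rightarrow> bool" where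
  "fsupp E M \<longleftrightarrow> (\<forall>y\<in>Ob E. \<forall>m\<in>Val M y. finite (msupp E M y m))"

lemma necessary:
  fixes E :: "('o, 'a::ab_group_add, 'k::field) klincat"
    and s :: "'k \<Rightarrow> 'w::ab_group_add \<Rightarrow> 'w" and M :: "('o, 'a, 'w) rmod"
    and T :: "'c::ab_group_add itself"
  assumes kc: "klin_cat E" and rm: "is_rmod E s M" and uc: "in_Upsilon_class E s M T"
  shows "(\<forall>x\<in>Ob E. fin_dim s (Val M x)) \<and> fsupp E M"
proof -
  obtain scN and NN :: "('o,'a,'c) rcomod" and \<phi> where
    rc: "is_rcomod E scN NN" and lf: "locally_finite_rcomod E scN NN"
    and iso: "rmod_iso E s M scN (Upsilon E NN) \<phi>"
    using uc by (auto simp: in_Upsilon_class_def rmod_isomorphic_def)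
  have vs: "vector_space s" using rm by (simp add: is_rmod_def)
  have vsN: "vector_space scN" using rc by (simp add: is_rcomod_def)
  have m: "module s" using vs module_iff_vector_space by blast
  have sub: "\<And>x. x\<in>Ob E \<Longrightarrow> module.subspace s (Val M x)" using rm by (simp add: is_rmod_def)
  have lin: "\<And>x. x\<in>Ob E \<Longrightarrow> lin_on s scN (Val M x) (\<phi> x)"
    and bij: "\<And>x. x\<in>Ob E \<Longrightarrow> bij_betw (\<phi> x) (Val M x) (Val (Upsilon E NN) x)"
    using iso by (auto simp: rmod_iso_def rmod_hom_def)
  have nat: "\<And>x y f m. x\<in>Ob E \<Longrightarrow> y\<in>Ob E \<Longrightarrow> f\<in>Hom E x y \<Longrightarrow> m\<in>Val M y \<Longrightarrow>
      \<phi> x (Act M x y f m) = Coact NN (\<phi> y m) x y f"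
    using iso unfolding rmod_iso_def rmod_hom_def Upsilon_def by simp
  have fd: "\<forall>x\<in>Ob E. fin_dim s (Val M x)"
  proof
    fix x assume x: "x \<in> Ob E"
    show "fin_dim s (Val M x)"
      by (rule fin_dim_iso[OF vs vsN sub[OF x] lin[OF x] bij[OF x]])
        (use lf x in \<open>simp add: locally_finite_rcomod_def locally_finite_rmod_def\<close>)
  qed
  have "fsupp E M"
    unfolding fsupp_def
  proof (intro ballI)
    fix y m assume y: "y \<in> Ob E" and mm: "m \<in> Val M y"
    have "\<phi> y m \<in> Val (Upsilon E NN) y" using bij[OF y] mm by (auto simp: bij_betw_def)
    then obtain n0 where n0: "n0 \<in> Car NN" "\<phi> y m = Coact NN n0 y y (ident E y)"
      by (auto simp: Upsilon_def)
    have idy: "ident E y \<in> Hom E y y" using kc y by (simp add: klin_cat_def)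
    have cl: "\<forall>n\<in>Car NN. \<forall>x\<in>Ob E. \<forall>y\<in>Ob E. \<forall>f\<in>Hom E x y. Coact NN n x y f \<in> Car NN"
      using rc unfolding is_rcomod_def by (elim conjE) assumption
    have nC: "\<phi> y m \<in> Car NN" using cl n0 y idy by simp
    let ?P = "{(x, y'). x \<in> Ob E \<and> y' \<in> Ob E \<and> (\<exists>f\<in>Hom E x y'. Coact NN (\<phi> y m) x y' f \<noteq> 0)}"
    have allfin: "\<forall>n\<in>Car NN. finite {(x, y). x \<in> Ob E \<and> y \<in> Ob E \<and> (\<exists>f\<in>Hom E x y. Coact NN n x y f \<noteq> 0)}"
      using rc unfolding is_rcomod_def by (elim conjE) assumption
    have fin: "finite ?P" using bspec[OF allfin nC] .
    have "msupp E M y m \<subseteq> fst ` ?P"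
    proof
      fix x assume "x \<in> msupp E M y m"
      then obtain f where x: "x \<in> Ob E" and f: "f \<in> Hom E x y" and nz: "Act M x y f m \<noteq> 0"
        by (auto simp: msupp_def)
      have am: "Act M x y f m \<in> Val M x" using rm x y f mm by (simp add: is_rmod_def)
      have z: "\<phi> x 0 = 0" using lin_on_zero[OF m sub[OF x] lin[OF x]] .
      have z0: "0 \<in> Val M x" using sub[OF x] m by (simp add: module.subspace_0)
      have "\<phi> x (Act M x y f m) \<noteq> 0"
      proof
        assume "\<phi> x (Act M x y f m) = 0"
        then have "\<phi> x (Act M x y f m) = \<phi> x 0" using z by simp
        then have "Act M x y f m = 0" using bij[OF x] am z0 unfolding bij_betw_def inj_on_def by blast
        then show False using nz by simp
      qed
      then have "Coact NN (\<phi> y m) x y f \<noteq> 0" using nat x y f mm by simp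
      then have "(x, y) \<in> ?P" using x y f by blast
      then show "x \<in> fst ` ?P" by force
    qed
    then show "finite (msupp E M y m)" using fin finite_subset by blast
  qed
  then show ?thesis using fd by blast
qed

definition scF :: "('k \<Rightarrow> 'm \<Rightarrow> 'm) \<Rightarrow> 'k \<Rightarrow> ('o \<Rightarrow> 'm) \<Rightarrow> ('o \<Rightarrow> 'm)" where
  "scF s c n = (\<lambda>z. s c (n z))"

definition dlt :: "'o \<Rightarrow> 'm::zero \<Rightarrow> 'o \<Rightarrow> 'm" where
  "dlt x m = (\<lambda>z. if z = x then m else 0)"

definition CarF :: "('o, 'a, 'k) klincat \<Rightarrow> ('o, 'a, 'm::zero) rmod \<Rightarrow> ('o \<Rightarrow> 'm) set" where
  "CarF E M = {n. (\<forall>z. z \<notin> Ob E \<longrightarrow> n z = 0) \<and> (\<forall>z\<in>Ob E. n z \<in> Val M z) \<and> finite {z. n z \<noteq> 0}}"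

definition CoactF :: "('o, 'a, 'm::zero) rmod \<Rightarrow> ('o \<Rightarrow> 'm) \<Rightarrow> 'o \<Rightarrow> 'o \<Rightarrow> 'a \<Rightarrow> ('o \<Rightarrow> 'm)" where
  "CoactF M n x y f = dlt x (Act M x y f (n y))"

definition NF :: "('o, 'a, 'k) klincat \<Rightarrow> ('o, 'a, 'm::zero) rmod \<Rightarrow> ('o, 'a, 'o \<Rightarrow> 'm) rcomod" where
  "NF E M = \<lparr>Car = CarF E M, Coact = CoactF M\<rparr>"

lemma vs_scF:
  assumes "vector_space s" shows "vector_space (scF s)"
  using assms unfolding vector_space_def scF_def by (simp add: fun_eq_iff)

lemma sum_fun_apply: "(\<Sum>x\<in>A. f x) z = (\<Sum>x\<in>A. f x z)"
  by (induction A rule: infinite_finite_induct) auto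

lemma dlt_eq0: "dlt x m = 0 \<longleftrightarrow> m = 0"
  by (auto simp: dlt_def fun_eq_iff)

lemma dlt_add: "dlt x (a + b) = dlt x a + dlt x (b::'m::monoid_add)"
  by (auto simp: dlt_def fun_eq_iff)

lemma dlt_scale: "module s \<Longrightarrow> dlt x (s c a) = scF s c (dlt x a)"
  by (auto simp: dlt_def fun_eq_iff scF_def module.scale_zero_right)

locale rm_ctx =
  fixes E :: "('o, 'a::ab_group_add, 'k::field) klincat"
    and s :: "'k \<Rightarrow> 'm::ab_group_add \<Rightarrow> 'm" and M :: "('o, 'a, 'm) rmod"
  assumes kc: "klin_cat E" and rm: "is_rmod E s M"
begin

lemma vs: "vector_space s" using rm by (simp add: is_rmod_def)
lemma md: "module s" using vs module_iff_vector_space by blast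
lemma sub: "x \<in> Ob E \<Longrightarrow> module.subspace s (Val M x)" using rm by (simp add: is_rmod_def)
lemma z0: "x \<in> Ob E \<Longrightarrow> 0 \<in> Val M x" using sub module.subspace_0[OF md] by blast
lemma act_in: "x \<in> Ob E \<Longrightarrow> y \<in> Ob E \<Longrightarrow> f \<in> Hom E x y \<Longrightarrow> m \<in> Val M y \<Longrightarrow> Act M x y f m \<in> Val M x"
  using rm unfolding is_rmod_def by blast
lemma act_lin: "x \<in> Ob E \<Longrightarrow> y \<in> Ob E \<Longrightarrow> f \<in> Hom E x y \<Longrightarrow> lin_on s s (Val M y) (Act M x y f)"
  using rm unfolding is_rmod_def by blast
lemma act_linf: "x \<in> Ob E \<Longrightarrow> y \<in> Ob E \<Longrightarrow> m \<in> Val M y \<Longrightarrow> lin_on (msc E) s (Hom E x y) (\<lambda>f. Act M x y f m)"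
  using rm unfolding is_rmod_def by blast
lemma act_id: "x \<in> Ob E \<Longrightarrow> m \<in> Val M x \<Longrightarrow> Act M x x (ident E x) m = m"
  using rm unfolding is_rmod_def by blast
lemma act_comp: "x \<in> Ob E \<Longrightarrow> y \<in> Ob E \<Longrightarrow> z \<in> Ob E \<Longrightarrow> g \<in> Hom E x y \<Longrightarrow> h \<in> Hom E y z \<Longrightarrow> m \<in> Val M z \<Longrightarrow>
   Act M x z (cmp E x y z h g) m = Act M x y g (Act M y z h m)"
  using rm unfolding is_rmod_def by blast
lemma act_0: "x \<in> Ob E \<Longrightarrow> y \<in> Ob E \<Longrightarrow> f \<in> Hom E x y \<Longrightarrow> Act M x y f 0 = 0"
  using lin_on_zero[OF md sub act_lin] by blast
lemma act_add: "x \<in> Ob E \<Longrightarrow> y \<in> Ob E \<Longrightarrow> f \<in> Hom E x y \<Longrightarrow> a \<in> Val M y \<Longrightarrow> b \<in> Val M y \<Longrightarrow>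
   Act M x y f (a + b) = Act M x y f a + Act M x y f b"
  using act_lin unfolding lin_on_def by blast
lemma act_scale: "x \<in> Ob E \<Longrightarrow> y \<in> Ob E \<Longrightarrow> f \<in> Hom E x y \<Longrightarrow> a \<in> Val M y \<Longrightarrow>
   Act M x y f (s c a) = s c (Act M x y f a)"
  using act_lin unfolding lin_on_def by blast
lemma act_addf: "x \<in> Ob E \<Longrightarrow> y \<in> Ob E \<Longrightarrow> m \<in> Val M y \<Longrightarrow> f \<in> Hom E x y \<Longrightarrow> g \<in> Hom E x y \<Longrightarrow>
   Act M x y (f + g) m = Act M x y f m + Act M x y g m"
  using act_linf unfolding lin_on_def by blast
lemma act_scalef: "x \<in> Ob E \<Longrightarrow> y \<in> Ob E \<Longrightarrow> m \<in> Val M y \<Longrightarrow> f \<in> Hom E x y \<Longrightarrow>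
   Act M x y (msc E c f) m = s c (Act M x y f m)"
  using act_linf unfolding lin_on_def by blast
lemma ident_in: "x \<in> Ob E \<Longrightarrow> ident E x \<in> Hom E x x" using kc by (simp add: klin_cat_def)

lemma carF_sub: "module.subspace (scF s) (CarF E M)"
proof -
  have mF: "module (scF s)" using vs_scF[OF vs] module_iff_vector_space by blast
  show ?thesis unfolding module.subspace_def[OF mF]
  proof (intro conjI ballI allI)
    show "0 \<in> CarF E M" using z0 by (simp add: CarF_def)
  next
    fix a b assume a: "a \<in> CarF E M" and b: "b \<in> CarF E M"
    have "{z. (a + b) z \<noteq> 0} \<subseteq> {z. a z \<noteq> 0} \<union> {z. b z \<noteq> 0}" by auto
    moreover have "finite ({z. a z \<noteq> 0} \<union> {z. b z \<noteq> 0})" using a b by (simp add: CarF_def)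
    ultimately have "finite {z. (a + b) z \<noteq> 0}" by (rule finite_subset)
    moreover have "\<forall>z\<in>Ob E. (a + b) z \<in> Val M z"
      using a b sub module.subspace_add[OF md] by (simp add: CarF_def)
    ultimately show "a + b \<in> CarF E M" using a b by (simp add: CarF_def)
  next
    fix c a assume a: "a \<in> CarF E M"
    have "{z. scF s c a z \<noteq> 0} \<subseteq> {z. a z \<noteq> 0}"
      using module.scale_zero_right[OF md] by (auto simp: scF_def)
    then have "finite {z. scF s c a z \<noteq> 0}" using a by (simp add: CarF_def finite_subset)
    moreover have "\<forall>z\<in>Ob E. scF s c a z \<in> Val M z"
      using a sub module.subspace_scale[OF md] by (simp add: CarF_def scF_def)
    moreover have "\<forall>z. z \<notin> Ob E \<longrightarrow> scF s c a z = 0"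
      using a module.scale_zero_right[OF md] by (simp add: CarF_def scF_def)
    ultimately show "scF s c a \<in> CarF E M" by (simp add: CarF_def)
  qed
qed

lemma dlt_carF: "x \<in> Ob E \<Longrightarrow> m \<in> Val M x \<Longrightarrow> dlt x m \<in> CarF E M"
proof -
  assume x: "x \<in> Ob E" and m: "m \<in> Val M x"
  have "{z. dlt x m z \<noteq> 0} \<subseteq> {x}" by (auto simp: dlt_def)
  then have "finite {z. dlt x m z \<noteq> 0}" by (rule finite_subset) simp
  then show ?thesis using x m z0 by (auto simp: CarF_def dlt_def)
qed

lemma carF_val: "n \<in> CarF E M \<Longrightarrow> y \<in> Ob E \<Longrightarrow> n y \<in> Val M y"
  by (simp add: CarF_def)

lemma coact_id: "n \<in> CarF E M \<Longrightarrow> x \<in> Ob E \<Longrightarrow> CoactF M n x x (ident E x) = dlt x (n x)"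
  unfolding CoactF_def using act_id carF_val by simp

lemma valU: "x \<in> Ob E \<Longrightarrow> Val (Upsilon E (NF E M)) x = dlt x ` Val M x"
proof -
  assume x: "x \<in> Ob E"
  have "Val (Upsilon E (NF E M)) x = (\<lambda>n. CoactF M n x x (ident E x)) ` CarF E M"
    by (simp add: Upsilon_def NF_def)
  also have "\<dots> = (\<lambda>n. dlt x (n x)) ` CarF E M" using coact_id x by (auto intro!: image_cong)
  also have "\<dots> = dlt x ` Val M x"
  proof
    show "(\<lambda>n. dlt x (n x)) ` CarF E M \<subseteq> dlt x ` Val M x" using carF_val x by blast
    show "dlt x ` Val M x \<subseteq> (\<lambda>n. dlt x (n x)) ` CarF E M"
    proof
      fix u assume "u \<in> dlt x ` Val M x"
      then obtain m where m: "m \<in> Val M x" "u = dlt x m" by blast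
      then have "dlt x m \<in> CarF E M" using dlt_carF x by blast
      moreover have "u = dlt x (dlt x m x)" using m by (simp add: dlt_def)
      ultimately show "u \<in> (\<lambda>n. dlt x (n x)) ` CarF E M" by blast
    qed
  qed
  finally show ?thesis .
qed

lemma dlt_lin: "lin_on s (scF s) (Val M x) (dlt x)"
  unfolding lin_on_def by (simp add: dlt_add dlt_scale[OF md])


lemma is_rcomodF:
  assumes fs: "\<forall>y\<in>Ob E. \<forall>m\<in>Val M y. finite {x\<in>Ob E. \<exists>f\<in>Hom E x y. Act M x y f m \<noteq> 0}"
  shows "is_rcomod E (scF s) (NF E M)"
proof -
  have c3: "\<forall>n\<in>CarF E M. \<forall>x\<in>Ob E. \<forall>y\<in>Ob E. \<forall>f\<in>Hom E x y. CoactF M n x y f \<in> CarF E M"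
    unfolding CoactF_def using dlt_carF act_in carF_val by blast
  have c4: "\<forall>x\<in>Ob E. \<forall>y\<in>Ob E. \<forall>f\<in>Hom E x y. lin_on (scF s) (scF s) (CarF E M) (\<lambda>n. CoactF M n x y f)"
  proof (intro ballI)
    fix x y f assume x: "x \<in> Ob E" and y: "y \<in> Ob E" and f: "f \<in> Hom E x y"
    show "lin_on (scF s) (scF s) (CarF E M) (\<lambda>n. CoactF M n x y f)"
      unfolding lin_on_def
    proof (intro conjI ballI allI)
      fix a b assume a: "a \<in> CarF E M" and b: "b \<in> CarF E M"
      show "CoactF M (a + b) x y f = CoactF M a x y f + CoactF M b x y f"
        unfolding CoactF_def using act_add[OF x y f carF_val[OF a y] carF_val[OF b y]]
        by (simp add: dlt_add)
    next
      fix c a assume a: "a \<in> CarF E M"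
      show "CoactF M (scF s c a) x y f = scF s c (CoactF M a x y f)"
        unfolding CoactF_def using act_scale[OF x y f carF_val[OF a y]]
        by (simp add: dlt_scale[OF md] scF_def)
    qed
  qed
  have c5: "\<forall>n\<in>CarF E M. \<forall>x\<in>Ob E. \<forall>y\<in>Ob E. lin_on (msc E) (scF s) (Hom E x y) (CoactF M n x y)"
  proof (intro ballI)
    fix n x y assume n: "n \<in> CarF E M" and x: "x \<in> Ob E" and y: "y \<in> Ob E"
    show "lin_on (msc E) (scF s) (Hom E x y) (CoactF M n x y)"
      unfolding lin_on_def
    proof (intro conjI ballI allI)
      fix f g assume f: "f \<in> Hom E x y" and g: "g \<in> Hom E x y"
      show "CoactF M n x y (f + g) = CoactF M n x y f + CoactF M n x y g"
        unfolding CoactF_def using act_addf[OF x y carF_val[OF n y] f g] by (simp add: dlt_add)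
    next
      fix c f assume f: "f \<in> Hom E x y"
      show "CoactF M n x y (msc E c f) = scF s c (CoactF M n x y f)"
        unfolding CoactF_def using act_scalef[OF x y carF_val[OF n y] f]
        by (simp add: dlt_scale[OF md])
    qed
  qed
  have c6: "\<forall>n\<in>CarF E M. finite {(x, y). x \<in> Ob E \<and> y \<in> Ob E \<and> (\<exists>f\<in>Hom E x y. CoactF M n x y f \<noteq> 0)}"
  proof
    fix n assume n: "n \<in> CarF E M"
    let ?Y = "{y. n y \<noteq> 0} \<inter> Ob E"
    have fY: "finite ?Y" using n by (simp add: CarF_def)
    have "{(x, y). x \<in> Ob E \<and> y \<in> Ob E \<and> (\<exists>f\<in>Hom E x y. CoactF M n x y f \<noteq> 0)}
       \<subseteq> (\<Union>y\<in>?Y. (\<lambda>x. (x, y)) ` {x\<in>Ob E. \<exists>f\<in>Hom E x y. Act M x y f (n y) \<noteq> 0})"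
    proof (clarify)
      fix x y f assume x: "x \<in> Ob E" and y: "y \<in> Ob E" and f: "f \<in> Hom E x y" and nz: "CoactF M n x y f \<noteq> 0"
      have a: "Act M x y f (n y) \<noteq> 0" using nz by (simp add: CoactF_def dlt_eq0)
      then have "n y \<noteq> 0" using act_0[OF x y f] by auto
      then show "(x, y) \<in> (\<Union>y\<in>?Y. (\<lambda>x. (x, y)) ` {x\<in>Ob E. \<exists>f\<in>Hom E x y. Act M x y f (n y) \<noteq> 0})"
        using x y f a by blast
    qed
    moreover have "finite (\<Union>y\<in>?Y. (\<lambda>x. (x, y)) ` {x\<in>Ob E. \<exists>f\<in>Hom E x y. Act M x y f (n y) \<noteq> 0})"
      using fY fs carF_val[OF n] by auto
    ultimately show "finite {(x, y). x \<in> Ob E \<and> y \<in> Ob E \<and> (\<exists>f\<in>Hom E x y. CoactF M n x y f \<noteq> 0)}"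
      by (rule finite_subset)
  qed
  have c7: "\<forall>n\<in>CarF E M. (\<Sum>x\<in>{x \<in> Ob E. CoactF M n x x (ident E x) \<noteq> 0}. CoactF M n x x (ident E x)) = n"
  proof
    fix n assume n: "n \<in> CarF E M"
    let ?F = "{x \<in> Ob E. n x \<noteq> 0}"
    have F: "{x \<in> Ob E. CoactF M n x x (ident E x) \<noteq> 0} = ?F"
      using coact_id[OF n] by (auto simp: dlt_eq0)
    have fF: "finite ?F" using n by (simp add: CarF_def)
    have "(\<Sum>x\<in>?F. CoactF M n x x (ident E x)) = (\<Sum>x\<in>?F. dlt x (n x))"
      using coact_id[OF n] by simp
    also have "\<dots> = n"
    proof
      fix z
      have "(\<Sum>x\<in>?F. dlt x (n x)) z = (\<Sum>x\<in>?F. if z = x then n x else 0)"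
        by (simp add: sum_fun_apply dlt_def)
      also have "\<dots> = (if z \<in> ?F then n z else 0)" using fF by (simp add: sum.delta)
      also have "\<dots> = n z" using n by (auto simp: CarF_def)
      finally show "(\<Sum>x\<in>?F. dlt x (n x)) z = n z" .
    qed
    finally show "(\<Sum>x\<in>{x \<in> Ob E. CoactF M n x x (ident E x) \<noteq> 0}. CoactF M n x x (ident E x)) = n"
      using F by simp
  qed
  have c8: "\<forall>n\<in>CarF E M. \<forall>x\<in>Ob E. \<forall>z\<in>Ob E. \<forall>z'\<in>Ob E. \<forall>y\<in>Ob E. \<forall>g\<in>Hom E x z. \<forall>h\<in>Hom E z' y.
        CoactF M (CoactF M n z' y h) x z g = (if z = z' then CoactF M n x y (cmp E x z y h g) else 0)"
  proof (intro ballI)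
    fix n x z z' y g h assume n: "n \<in> CarF E M" and x: "x \<in> Ob E" and z: "z \<in> Ob E" and z': "z' \<in> Ob E"
      and y: "y \<in> Ob E" and g: "g \<in> Hom E x z" and h: "h \<in> Hom E z' y"
    show "CoactF M (CoactF M n z' y h) x z g = (if z = z' then CoactF M n x y (cmp E x z y h g) else 0)"
    proof (cases "z = z'")
      case True
      then show ?thesis unfolding CoactF_def
        using act_comp[OF x z y g _ carF_val[OF n y]] h by (simp add: dlt_def)
    next
      case False
      then show ?thesis unfolding CoactF_def using act_0[OF x z g] by (simp add: dlt_def fun_eq_iff)
    qed
  qed
  show ?thesis unfolding is_rcomod_def NF_def
    using vs_scF[OF vs] carF_sub c3 c4 c5 c6 c7 c8 by simp
qed

lemma sufficient:
  assumes fs: "\<forall>y\<in>Ob E. \<forall>m\<in>Val M y. finite {x\<in>Ob E. \<exists>f\<in>Hom E x y. Act M x y f m \<noteq> 0}"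
    and fd: "\<forall>x\<in>Ob E. fin_dim s (Val M x)"
  shows "in_Upsilon_class E s M TYPE('o \<Rightarrow> 'm)"
proof -
  have lf: "locally_finite_rcomod E (scF s) (NF E M)"
    unfolding locally_finite_rcomod_def locally_finite_rmod_def
  proof
    fix x assume x: "x \<in> Ob E"
    show "fin_dim (scF s) (Val (Upsilon E (NF E M)) x)"
      unfolding valU[OF x] using fin_dim_image[OF vs vs_scF[OF vs] sub[OF x] dlt_lin] fd x by blast
  qed
  have iso: "rmod_iso E s M (scF s) (Upsilon E (NF E M)) dlt"
    unfolding rmod_iso_def rmod_hom_def
  proof (intro conjI ballI)
    fix x assume x: "x \<in> Ob E"
    show "lin_on s (scF s) (Val M x) (dlt x)" by (rule dlt_lin)
    fix m assume "m \<in> Val M x"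
    then show "dlt x m \<in> Val (Upsilon E (NF E M)) x" unfolding valU[OF x] by blast
  next
    fix x y f m assume x: "x \<in> Ob E" and y: "y \<in> Ob E" and f: "f \<in> Hom E x y" and m: "m \<in> Val M y"
    show "dlt x (Act M x y f m) = Act (Upsilon E (NF E M)) x y f (dlt y m)"
      by (simp add: Upsilon_def NF_def CoactF_def dlt_def)
  next
    fix x assume x: "x \<in> Ob E"
    have "inj_on (dlt x) (Val M x)" unfolding inj_on_def dlt_def by (metis)
    then show "bij_betw (dlt x) (Val M x) (Val (Upsilon E (NF E M)) x)"
      unfolding valU[OF x] bij_betw_def by blast
  qed
  show ?thesis unfolding in_Upsilon_class_def rmod_isomorphic_def
    using is_rcomodF[OF fs] lf iso by blast
qed

end

lemma ext_fin_dim: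
  fixes E :: "('o, 'a::ab_group_add, 'k::field) klincat"
    and sL :: "'k \<Rightarrow> 'l::ab_group_add \<Rightarrow> 'l" and L :: "('o, 'a, 'l) rmod"
    and sM :: "'k \<Rightarrow> 'm::ab_group_add \<Rightarrow> 'm" and M :: "('o, 'a, 'm) rmod"
    and sN :: "'k \<Rightarrow> 'n::ab_group_add \<Rightarrow> 'n" and N :: "('o, 'a, 'n) rmod"
    and i :: "'o \<Rightarrow> 'l \<Rightarrow> 'm" and p :: "'o \<Rightarrow> 'm \<Rightarrow> 'n"
  assumes kc: "klin_cat E"
    and rmL: "is_rmod E sL L" and rmM: "is_rmod E sM M" and rmN: "is_rmod E sN N"
    and se: "short_exact E sL L sM M sN N i p"
    and fdL: "\<forall>x\<in>Ob E. fin_dim sL (Val L x)" and fdN: "\<forall>x\<in>Ob E. fin_dim sN (Val N x)"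
    and x: "x \<in> Ob E"
  shows "fin_dim sM (Val M x)"
proof -
  interpret Lc: rm_ctx E sL L using kc rmL by unfold_locales
  interpret Mc: rm_ctx E sM M using kc rmM by unfold_locales
  interpret Nc: rm_ctx E sN N using kc rmN by unfold_locales
  have linI: "lin_on sL sM (Val L x) (i x)" and iin: "\<forall>l\<in>Val L x. i x l \<in> Val M x"
    and linP: "lin_on sM sN (Val M x) (p x)" and pin: "\<forall>m\<in>Val M x. p x m \<in> Val N x"
    using se x unfolding short_exact_def rmod_hom_def by blast+
  have pimg: "p x ` Val M x = Val N x" and ker: "i x ` Val L x = {m \<in> Val M x. p x m = 0}"
    using se x unfolding short_exact_def by blast+
  obtain BL where BL: "finite BL" "module.span sL BL = Val L x" using fdL x unfolding fin_dim_def by blast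
  obtain BN where BN: "finite BN" "module.span sN BN = Val N x" using fdN x unfolding fin_dim_def by blast
  have BLs: "BL \<subseteq> Val L x" using BL(2) module.span_superset[OF Lc.md, of BL] by simp
  have BNs: "BN \<subseteq> Val N x" using BN(2) module.span_superset[OF Nc.md, of BN] by simp
  have "\<forall>b\<in>BN. \<exists>m. m \<in> Val M x \<and> p x m = b"
  proof
    fix b assume "b \<in> BN"
    then have "b \<in> Val N x" using BNs by (rule subsetD[rotated])
    then have "b \<in> p x ` Val M x" using pimg by simp
    then show "\<exists>m. m \<in> Val M x \<and> p x m = b" by (metis imageE)
  qed
  then obtain pre where pre: "\<And>b. b \<in> BN \<Longrightarrow> pre b \<in> Val M x \<and> p x (pre b) = b" by metis
  define B where "B = i x ` BL \<union> pre ` BN"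
  have fB: "finite B" using BL BN by (simp add: B_def)
  have BM: "B \<subseteq> Val M x" unfolding B_def using BLs iin pre by blast
  have "Val M x = module.span sM B"
  proof
    show "module.span sM B \<subseteq> Val M x" by (rule module.span_minimal[OF Mc.md BM Mc.sub[OF x]])
  next
    show "Val M x \<subseteq> module.span sM B"
    proof
      fix m assume m: "m \<in> Val M x"
      have "p x m \<in> module.span sN BN" using pin m BN(2) by blast
      then obtain t r where tr: "finite t" "t \<subseteq> BN" "p x m = (\<Sum>a\<in>t. sN (r a) a)"
        unfolding module.span_explicit[OF Nc.md] by blast
      define m1 where "m1 = (\<Sum>a\<in>t. sM (r a) (pre a))"
      have tM: "\<forall>a\<in>t. pre a \<in> Val M x" using tr(2) pre by blast
      have m1M: "m1 \<in> Val M x" unfolding m1_def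
        apply (rule module.subspace_sum[OF Mc.md Mc.sub[OF x]])
        apply (rule module.subspace_scale[OF Mc.md Mc.sub[OF x]])
        using tM by blast
      have m1B: "m1 \<in> module.span sM B" unfolding m1_def
        apply (rule module.span_sum[OF Mc.md])
        apply (rule module.span_scale[OF Mc.md])
        apply (rule module.span_base[OF Mc.md])
        using tr(2) unfolding B_def by blast
      have "p x m1 = (\<Sum>a\<in>t. sN (r a) (p x (pre a)))"
        unfolding m1_def by (rule lin_on_sum[OF Mc.md Nc.md Mc.sub[OF x] linP tM])
      also have "\<dots> = (\<Sum>a\<in>t. sN (r a) a)"
        by (rule sum.cong) (use tr(2) pre in auto)
      finally have pm1: "p x m1 = p x m" using tr(3) by simp
      have dM: "m - m1 \<in> Val M x" using module.subspace_diff[OF Mc.md Mc.sub[OF x] m m1M] .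
      have "p x (m - m1) = p x m - p x m1" by (rule lin_on_diff[OF Mc.md Mc.sub[OF x] linP m m1M])
      then have "p x (m - m1) = 0" using pm1 by simp
      then have "m - m1 \<in> i x ` Val L x" using ker dM by blast
      then obtain l where l: "l \<in> Val L x" "m - m1 = i x l" by blast
      then have "l \<in> module.span sL BL" using BL(2) by simp
      then obtain u q where uq: "finite u" "u \<subseteq> BL" "l = (\<Sum>a\<in>u. sL (q a) a)"
        unfolding module.span_explicit[OF Lc.md] by blast
      have uL: "\<forall>a\<in>u. a \<in> Val L x" using uq(2) BLs by blast
      have "i x l = (\<Sum>a\<in>u. sM (q a) (i x a))"
        unfolding uq(3) by (rule lin_on_sum[OF Lc.md Mc.md Lc.sub[OF x] linI uL])
      also have "\<dots> \<in> module.span sM B"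
        apply (rule module.span_sum[OF Mc.md])
        apply (rule module.span_scale[OF Mc.md])
        apply (rule module.span_base[OF Mc.md])
        using uq(2) unfolding B_def by blast
      finally have "m - m1 \<in> module.span sM B" using l by simp
      then have "(m - m1) + m1 \<in> module.span sM B" using m1B module.span_add[OF Mc.md] by blast
      then show "m \<in> module.span sM B" by simp
    qed
  qed
  then show ?thesis using fB unfolding fin_dim_def by blast
qed

lemma obj_le_trans: "obj_le E a b \<Longrightarrow> obj_le E b c \<Longrightarrow> obj_le E a c"
  unfolding obj_le_def by (rule tranclp_trans)

lemma obj_less_trans:
  assumes ab: "obj_less E a b" and bc: "obj_less E b c" shows "obj_less E a c"
proof -
  have 1: "obj_le E a b" "\<not> obj_le E b a" using ab unfolding obj_less_def by (rule conjunct1, rule conjunct2)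
  have 2: "obj_le E b c" using bc unfolding obj_less_def by (rule conjunct1)
  have "obj_le E a c" by (rule obj_le_trans[OF 1(1) 2])
  moreover have "\<not> obj_le E c a"
  proof
    assume "obj_le E c a"
    then have "obj_le E b a" by (rule obj_le_trans[OF 2])
    then show False using 1(2) by (rule notE[rotated])
  qed
  ultimately show ?thesis unfolding obj_less_def by (rule conjI)
qed

lemma wf_R:
  assumes fS: "finite S" shows "wf {(a, b). a \<in> S \<and> b \<in> S \<and> obj_less E a b}"
proof -
  let ?R = "{(a, b). a \<in> S \<and> b \<in> S \<and> obj_less E a b}"
  have "?R \<subseteq> S \<times> S" by blast
  then have fR: "finite ?R" by (rule finite_subset) (use fS in simp)
  have tr: "obj_less E a b" if "(a, b) \<in> ?R\<^sup>+" for a b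
    using that
  proof (induction rule: trancl_induct)
    case (base y) then show ?case by simp
  next
    case (step y z)
    have "obj_less E y z" using step.hyps(2) by simp
    then show ?case by (rule obj_less_trans[OF step.IH])
  qed
  have "acyclic ?R" unfolding acyclic_def
  proof (intro allI notI)
    fix x assume "(x, x) \<in> ?R\<^sup>+"
    then have "obj_less E x x" by (rule tr)
    then show False unfolding obj_less_def by blast
  qed
  then show ?thesis by (rule finite_acyclic_wf[OF fR])
qed

lemma sum_nz: "sum F A \<noteq> 0 \<Longrightarrow> \<exists>a\<in>A. F a \<noteq> 0"
proof (rule ccontr)
  assume s: "sum F A \<noteq> 0" and "\<not> (\<exists>a\<in>A. F a \<noteq> 0)"
  then have "\<forall>a\<in>A. F a = 0" by blast
  then have "sum F A = 0" by (rule sum.neutral)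
  then show False using s by (rule notE[rotated])
qed

lemma ext_fsupp:
  fixes E :: "('o, 'a::ab_group_add, 'k::field) klincat"
    and sL :: "'k \<Rightarrow> 'l::ab_group_add \<Rightarrow> 'l" and L :: "('o, 'a, 'l) rmod"
    and sM :: "'k \<Rightarrow> 'm::ab_group_add \<Rightarrow> 'm" and M :: "('o, 'a, 'm) rmod"
    and sN :: "'k \<Rightarrow> 'n::ab_group_add \<Rightarrow> 'n" and N :: "('o, 'a, 'n) rmod"
    and i :: "'o \<Rightarrow> 'l \<Rightarrow> 'm" and p :: "'o \<Rightarrow> 'm \<Rightarrow> 'n"
  assumes kc: "klin_cat E" and lsl: "left_strictly_locally_finite E"
    and rmL: "is_rmod E sL L" and rmM: "is_rmod E sM M" and rmN: "is_rmod E sN N"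
    and se: "short_exact E sL L sM M sN N i p"
    and fsL: "fsupp E L" and fsN: "fsupp E N"
  shows "fsupp E M"
proof -
  interpret Lc: rm_ctx E sL L using kc rmL by unfold_locales
  interpret Mc: rm_ctx E sM M using kc rmM by unfold_locales
  interpret Nc: rm_ctx E sN N using kc rmN by unfold_locales
  have lfc: "locally_finite_cat E" using lsl unfolding left_strictly_locally_finite_def by (rule conjunct1)
  have hi: "rmod_hom E sL L sM M i" and hp: "rmod_hom E sM M sN N p"
    and ex: "\<forall>x\<in>Ob E. inj_on (i x) (Val L x) \<and> p x ` Val M x = Val N x \<and> i x ` Val L x = {m \<in> Val M x. p x m = 0}"
    using se unfolding short_exact_def by (blast, blast, blast)
  have hi1: "\<forall>x\<in>Ob E. lin_on sL sM (Val L x) (i x) \<and> (\<forall>m\<in>Val L x. i x m \<in> Val M x)"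
    and hi2: "\<forall>x\<in>Ob E. \<forall>y\<in>Ob E. \<forall>f\<in>Hom E x y. \<forall>m\<in>Val L y. i x (Act L x y f m) = Act M x y f (i y m)"
    using hi unfolding rmod_hom_def by (rule conjunct1, rule conjunct2)
  have hp1: "\<forall>x\<in>Ob E. lin_on sM sN (Val M x) (p x) \<and> (\<forall>m\<in>Val M x. p x m \<in> Val N x)"
    and hp2: "\<forall>x\<in>Ob E. \<forall>y\<in>Ob E. \<forall>f\<in>Hom E x y. \<forall>m\<in>Val M y. p x (Act M x y f m) = Act N x y f (p y m)"
    using hp unfolding rmod_hom_def by (rule conjunct1, rule conjunct2)
  have iL: "\<And>x. x \<in> Ob E \<Longrightarrow> lin_on sL sM (Val L x) (i x)" using hi1 by blast
  have iN: "\<And>x y f l. x \<in> Ob E \<Longrightarrow> y \<in> Ob E \<Longrightarrow> f \<in> Hom E x y \<Longrightarrow> l \<in> Val L y \<Longrightarrow>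
        i x (Act L x y f l) = Act M x y f (i y l)" using hi2 by blast
  have pI: "\<And>x m. x \<in> Ob E \<Longrightarrow> m \<in> Val M x \<Longrightarrow> p x m \<in> Val N x" using hp1 by blast
  have pN: "\<And>x y f m. x \<in> Ob E \<Longrightarrow> y \<in> Ob E \<Longrightarrow> f \<in> Hom E x y \<Longrightarrow> m \<in> Val M y \<Longrightarrow>
        p x (Act M x y f m) = Act N x y f (p y m)" using hp2 by blast
  have ker: "\<And>x. x \<in> Ob E \<Longrightarrow> i x ` Val L x = {m \<in> Val M x. p x m = 0}"
    using ex by blast
  have cmpI: "\<And>x y z g h. x \<in> Ob E \<Longrightarrow> y \<in> Ob E \<Longrightarrow> z \<in> Ob E \<Longrightarrow> g \<in> Hom E x y \<Longrightarrow> h \<in> Hom E y z \<Longrightarrow>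
      cmp E x y z h g \<in> Hom E x z"
  proof -
    have "\<forall>x\<in>Ob E. \<forall>y\<in>Ob E. \<forall>z\<in>Ob E. \<forall>g\<in>Hom E x y. \<forall>h\<in>Hom E y z. cmp E x y z h g \<in> Hom E x z"
      using kc unfolding klin_cat_def by (elim conjE) assumption
    then show "\<And>x y z g h. x \<in> Ob E \<Longrightarrow> y \<in> Ob E \<Longrightarrow> z \<in> Ob E \<Longrightarrow> g \<in> Hom E x y \<Longrightarrow> h \<in> Hom E y z \<Longrightarrow>
      cmp E x y z h g \<in> Hom E x z" by blast
  qed
  have homsub: "\<And>x y. x \<in> Ob E \<Longrightarrow> y \<in> Ob E \<Longrightarrow> module.subspace (msc E) (Hom E x y)"
  proof -
    have "\<forall>x\<in>Ob E. \<forall>y\<in>Ob E. module.subspace (msc E) (Hom E x y)"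
      using kc unfolding klin_cat_def by (elim conjE) assumption
    then show "\<And>x y. x \<in> Ob E \<Longrightarrow> y \<in> Ob E \<Longrightarrow> module.subspace (msc E) (Hom E x y)" by blast
  qed
  have mE: "module (msc E)" using kc unfolding klin_cat_def module_iff_vector_space by (elim conjE) assumption
  have base: "finite (msupp E M z m')" if z: "z \<in> Ob E" and m': "m' \<in> Val M z" and p0: "p z m' = 0" for z m'
  proof -
    have "m' \<in> i z ` Val L z" using ker[OF z] m' p0 by blast
    then obtain l where l: "l \<in> Val L z" "m' = i z l" by blast
    have "msupp E M z m' \<subseteq> msupp E L z l"
    proof
      fix x assume "x \<in> msupp E M z m'"
      then obtain f where x: "x \<in> Ob E" and f: "f \<in> Hom E x z" and nz: "Act M x z f m' \<noteq> 0"
        unfolding msupp_def by blast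
      have "i x (Act L x z f l) \<noteq> 0" using nz iN[OF x z f l(1)] l(2) by simp
      moreover have "i x 0 = 0" by (rule lin_on_zero[OF Lc.md Lc.sub[OF x] iL[OF x]])
      ultimately have "Act L x z f l \<noteq> 0" by auto
      then show "x \<in> msupp E L z l" unfolding msupp_def using x f by blast
    qed
    moreover have "finite (msupp E L z l)" using fsL z l(1) unfolding fsupp_def by blast
    ultimately show ?thesis by (rule finite_subset)
  qed
  have pmono: "msupp E N x' (p x' (Act M x' z b m')) \<subseteq> msupp E N z (p z m')"
    if x': "x' \<in> Ob E" and z: "z \<in> Ob E" and b: "b \<in> Hom E x' z" and m': "m' \<in> Val M z" for x' z b m'
  proof
    fix x assume "x \<in> msupp E N x' (p x' (Act M x' z b m'))"
    then obtain g where x: "x \<in> Ob E" and g: "g \<in> Hom E x x'" and nz: "Act N x x' g (p x' (Act M x' z b m')) \<noteq> 0"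
      unfolding msupp_def by blast
    have "Act N x x' g (p x' (Act M x' z b m')) = Act N x z (cmp E x x' z b g) (p z m')"
      using pN[OF x' z b m'] Nc.act_comp[OF x x' z g b pI[OF z m']] by simp
    then show "x \<in> msupp E N z (p z m')" using nz cmpI[OF x x' z g b] x unfolding msupp_def by auto
  qed
  show ?thesis unfolding fsupp_def
  proof (intro ballI)
    fix y m assume y: "y \<in> Ob E" and m: "m \<in> Val M y"
    define S where "S = msupp E N y (p y m)"
    have fS: "finite S" unfolding S_def using fsN y pI[OF y m] unfolding fsupp_def by blast
    have notS: "p z m' = 0" if z: "z \<in> Ob E" and m': "m' \<in> Val M z" and sS: "msupp E N z (p z m') \<subseteq> S"
      and zS: "z \<notin> S" for z m'
    proof (rule ccontr)
      assume nz: "p z m' \<noteq> 0"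
      have "Act N z z (ident E z) (p z m') = p z m'" by (rule Nc.act_id[OF z pI[OF z m']])
      then have "Act N z z (ident E z) (p z m') \<noteq> 0" using nz by simp
      then have "z \<in> msupp E N z (p z m')" unfolding msupp_def using z Nc.ident_in[OF z] by blast
      then show False using sS zS by blast
    qed
    let ?R = "{(a, b). a \<in> S \<and> b \<in> S \<and> obj_less E a b}"
    have claim: "\<forall>m'. z \<in> Ob E \<longrightarrow> m' \<in> Val M z \<longrightarrow> msupp E N z (p z m') \<subseteq> S \<longrightarrow> finite (msupp E M z m')" for z
    proof (induction z rule: wf_induct[OF wf_R[of S E, OF fS]])
      case (1 z)
      show ?case
      proof (intro allI impI)
        fix m' assume z: "z \<in> Ob E" and m': "m' \<in> Val M z" and sS: "msupp E N z (p z m') \<subseteq> S"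
        show "finite (msupp E M z m')"
        proof (cases "z \<in> S")
          case False
          then show ?thesis using base[OF z m'] notS[OF z m' sS] by blast
        next
          case True
          have "\<forall>y\<in>Ob E. \<exists>X. finite X \<and> X \<subseteq> Ob E \<and> (\<forall>x\<in>X. obj_less E x y) \<and>
              (\<forall>w\<in>Ob E. obj_less E w y \<longrightarrow> (\<forall>f\<in>Hom E w y.
                 \<exists>(n::nat) xs g h. (\<forall>j<n. xs j \<in> X \<and> g j \<in> Hom E w (xs j) \<and> h j \<in> Hom E (xs j) y)
                   \<and> f = (\<Sum>j<n. cmp E w (xs j) y (h j) (g j))))"
            using lsl unfolding left_strictly_locally_finite_def by (rule conjunct2)
          then have "\<exists>X. finite X \<and> X \<subseteq> Ob E \<and> (\<forall>x\<in>X. obj_less E x z) \<and>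
              (\<forall>w\<in>Ob E. obj_less E w z \<longrightarrow> (\<forall>f\<in>Hom E w z.
                 \<exists>(n::nat) xs g h. (\<forall>j<n. xs j \<in> X \<and> g j \<in> Hom E w (xs j) \<and> h j \<in> Hom E (xs j) z)
                   \<and> f = (\<Sum>j<n. cmp E w (xs j) z (h j) (g j))))"
            using z by (rule bspec)
          then obtain X where X: "finite X" "X \<subseteq> Ob E" "\<forall>x\<in>X. obj_less E x z"
            and dec: "\<forall>w\<in>Ob E. obj_less E w z \<longrightarrow> (\<forall>f\<in>Hom E w z.
               \<exists>(n::nat) xs g h. (\<forall>j<n. xs j \<in> X \<and> g j \<in> Hom E w (xs j) \<and> h j \<in> Hom E (xs j) z)
                 \<and> f = (\<Sum>j<n. cmp E w (xs j) z (h j) (g j)))"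
            by (elim exE conjE)
          define BB where "BB x' = (SOME B. finite B \<and> module.span (msc E) B = Hom E x' z)" for x'
          have BB: "finite (BB x') \<and> module.span (msc E) (BB x') = Hom E x' z" if "x' \<in> Ob E" for x'
          proof -
            have "\<forall>x\<in>Ob E. \<forall>y\<in>Ob E. fin_dim (msc E) (Hom E x y)"
              using lfc unfolding locally_finite_cat_def by (rule conjunct1)
            then have "fin_dim (msc E) (Hom E x' z)" using that z by blast
            then have "\<exists>B. finite B \<and> module.span (msc E) B = Hom E x' z" unfolding fin_dim_def .
            then show ?thesis unfolding BB_def by (rule someI_ex)
          qed
          have BBH: "BB x' \<subseteq> Hom E x' z" if "x' \<in> Ob E" for x'
            using BB[OF that] module.span_superset[OF mE, of "BB x'"] by simp
          define A where "A = {w \<in> Ob E. obj_le E z w \<and> obj_le E w z}"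
          have "\<forall>x\<in>Ob E. \<forall>y\<in>Ob E. finite {w \<in> Ob E. obj_le E x w \<and> obj_le E w y}"
            using lfc unfolding locally_finite_cat_def by (rule conjunct2)
          then have fA: "finite A" unfolding A_def using z by blast
          define U where "U = (\<Union>x'\<in>X. \<Union>b\<in>BB x'. msupp E M x' (Act M x' z b m'))"
          have fU: "finite U" unfolding U_def
          proof (intro finite_UN_I)
            show "finite X" by (rule X(1))
          next
            fix x' assume x'X: "x' \<in> X"
            have x': "x' \<in> Ob E" using x'X X(2) by blast
            show "finite (BB x')" using BB[OF x'] by blast
            fix b assume "b \<in> BB x'"
            then have b: "b \<in> Hom E x' z" using BBH[OF x'] by blast
            have m'': "Act M x' z b m' \<in> Val M x'" by (rule Mc.act_in[OF x' z b m'])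
            have sS': "msupp E N x' (p x' (Act M x' z b m')) \<subseteq> S" using pmono[OF x' z b m'] sS by blast
            show "finite (msupp E M x' (Act M x' z b m'))"
            proof (cases "x' \<in> S")
              case True
              then have "(x', z) \<in> ?R" using \<open>z \<in> S\<close> X(3) x'X by blast
              then show ?thesis by (rule "1"[rule_format, OF _ x' m'' sS'])
            next
              case False
              then show ?thesis using base[OF x' m''] notS[OF x' m'' sS'] by blast
            qed
          qed
          have "msupp E M z m' \<subseteq> A \<union> U"
          proof
            fix x assume "x \<in> msupp E M z m'"
            then obtain f where x: "x \<in> Ob E" and f: "f \<in> Hom E x z" and nz: "Act M x z f m' \<noteq> 0"
              unfolding msupp_def by blast
            have "Act M x z 0 m' = 0"
              by (rule lin_on_zero[OF mE homsub[OF x z] Mc.act_linf[OF x z m']])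
            then have "f \<noteq> 0" using nz by auto
            then have "hom_nz E x z" unfolding hom_nz_def using x z f by blast
            then have le: "obj_le E x z" unfolding obj_le_def by (rule tranclp.r_into_trancl)
            show "x \<in> A \<union> U"
            proof (cases "obj_le E z x")
              case True
              then show ?thesis unfolding A_def using x le by blast
            next
              case False
              then have lt: "obj_less E x z" using le unfolding obj_less_def by blast
              have "obj_less E x z \<longrightarrow> (\<forall>f\<in>Hom E x z.
               \<exists>(n::nat) xs g h. (\<forall>j<n. xs j \<in> X \<and> g j \<in> Hom E x (xs j) \<and> h j \<in> Hom E (xs j) z)
                 \<and> f = (\<Sum>j<n. cmp E x (xs j) z (h j) (g j)))" using dec x by (rule bspec)
              then have "\<forall>f\<in>Hom E x z.
               \<exists>(n::nat) xs g h. (\<forall>j<n. xs j \<in> X \<and> g j \<in> Hom E x (xs j) \<and> h j \<in> Hom E (xs j) z)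
                 \<and> f = (\<Sum>j<n. cmp E x (xs j) z (h j) (g j))" using lt by (rule mp)
              then have "\<exists>(n::nat) xs g h. (\<forall>j<n. xs j \<in> X \<and> g j \<in> Hom E x (xs j) \<and> h j \<in> Hom E (xs j) z)
                 \<and> f = (\<Sum>j<n. cmp E x (xs j) z (h j) (g j))" using f by (rule bspec)
              then obtain n xs g h where gh: "\<forall>j<(n::nat). xs j \<in> X \<and> g j \<in> Hom E x (xs j) \<and> h j \<in> Hom E (xs j) z"
                and fe: "f = (\<Sum>j<n. cmp E x (xs j) z (h j) (g j))"
                by blast
              have xsO: "\<And>j. j < n \<Longrightarrow> xs j \<in> Ob E" using gh X(2) by blast
              have "Act M x z f m' = (\<Sum>j<n. Act M x z (cmp E x (xs j) z (h j) (g j)) m')"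
                unfolding fe
              proof (rule lin_on_sum_plain[OF mE homsub[OF x z] Mc.act_linf[OF x z m']], rule ballI)
                fix j assume "j \<in> {..<n}"
                then have j: "j < n" by simp
                show "cmp E x (xs j) z (h j) (g j) \<in> Hom E x z"
                  by (rule cmpI[OF x xsO[OF j] z]) (use gh j in blast)+
              qed
              also have "\<dots> = (\<Sum>j<n. Act M x (xs j) (g j) (Act M (xs j) z (h j) m'))"
              proof (rule sum.cong)
                fix j assume "j \<in> {..<n}"
                then have j: "j < n" by simp
                show "Act M x z (cmp E x (xs j) z (h j) (g j)) m' = Act M x (xs j) (g j) (Act M (xs j) z (h j) m')"
                  by (rule Mc.act_comp[OF x xsO[OF j] z _ _ m']) (use gh j in blast)+
              qed simp
              finally have "(\<Sum>j<n. Act M x (xs j) (g j) (Act M (xs j) z (h j) m')) \<noteq> 0" using nz by simp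
              then obtain j where j: "j < n" and nzj: "Act M x (xs j) (g j) (Act M (xs j) z (h j) m') \<noteq> 0"
                using sum_nz[of _ "{..<n}"] by blast
              have xj: "xs j \<in> Ob E" using xsO j .
              have gj: "g j \<in> Hom E x (xs j)" and hj: "h j \<in> Hom E (xs j) z" using gh j by blast+
              have "h j \<in> module.span (msc E) (BB (xs j))" using BB[OF xj] hj by simp
              then obtain t r where tr: "finite t" "t \<subseteq> BB (xs j)" "h j = (\<Sum>a\<in>t. msc E (r a) a)"
                unfolding module.span_explicit[OF mE] by blast
              have tH: "\<forall>a\<in>t. a \<in> Hom E (xs j) z" using tr(2) BBH[OF xj] by blast
              have tV: "\<forall>a\<in>t. Act M (xs j) z a m' \<in> Val M (xs j)" using tH Mc.act_in[OF xj z _ m'] by blast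
              have "Act M (xs j) z (h j) m' = (\<Sum>a\<in>t. sM (r a) (Act M (xs j) z a m'))"
                unfolding tr(3)
                by (rule lin_on_sum[OF mE Mc.md homsub[OF xj z] Mc.act_linf[OF xj z m'] tH])
              then have "Act M x (xs j) (g j) (Act M (xs j) z (h j) m')
                  = (\<Sum>a\<in>t. sM (r a) (Act M x (xs j) (g j) (Act M (xs j) z a m')))"
                using lin_on_sum[OF Mc.md Mc.md Mc.sub[OF xj] Mc.act_lin[OF x xj gj] tV] by simp
              then have "(\<Sum>a\<in>t. sM (r a) (Act M x (xs j) (g j) (Act M (xs j) z a m'))) \<noteq> 0" using nzj by simp
              then obtain a where a: "a \<in> t" and nza: "sM (r a) (Act M x (xs j) (g j) (Act M (xs j) z a m')) \<noteq> 0"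
                using sum_nz by blast
              then have "Act M x (xs j) (g j) (Act M (xs j) z a m') \<noteq> 0"
                using module.scale_zero_right[OF Mc.md] by metis
              then have "x \<in> msupp E M (xs j) (Act M (xs j) z a m')" unfolding msupp_def using x gj by blast
              moreover have "xs j \<in> X" using gh j by blast
              moreover have "a \<in> BB (xs j)" using a tr(2) by blast
              ultimately show ?thesis unfolding U_def by blast
            qed
          qed
          moreover have "finite (A \<union> U)" using fA fU by simp
          ultimately show ?thesis by (rule finite_subset)
        qed
      qed
    qed
    show "finite (msupp E M y m)" using claim[of y] y m unfolding S_def by blast
  qed
qed

theorem corollary6p4:
  fixes E :: "('o, 'a::ab_group_add, 'k::field) klincat"
    and sL :: "'k \<Rightarrow> 'l::ab_group_add \<Rightarrow> 'l" and L :: "('o, 'a, 'l) rmod"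
    and sM :: "'k \<Rightarrow> 'm::ab_group_add \<Rightarrow> 'm" and M :: "('o, 'a, 'm) rmod"
    and sN :: "'k \<Rightarrow> 'n::ab_group_add \<Rightarrow> 'n" and N :: "('o, 'a, 'n) rmod"
    and i :: "'o \<Rightarrow> 'l \<Rightarrow> 'm" and p :: "'o \<Rightarrow> 'm \<Rightarrow> 'n"
  assumes "klin_cat E"
    and "left_strictly_locally_finite E"
    and "is_rmod E sL L" and "is_rmod E sM M" and "is_rmod E sN N"
    and "short_exact E sL L sM M sN N i p"
    and "in_Upsilon_class E sL L TYPE('cL::ab_group_add)"
    and "in_Upsilon_class E sN N TYPE('cN::ab_group_add)"
  shows "in_Upsilon_class E sM M TYPE('o \<Rightarrow> 'm)"
proof -
  have Lp: "(\<forall>x\<in>Ob E. fin_dim sL (Val L x)) \<and> fsupp E L"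
    by (rule necessary[OF assms(1) assms(3) assms(7)])
  have Np: "(\<forall>x\<in>Ob E. fin_dim sN (Val N x)) \<and> fsupp E N"
    by (rule necessary[OF assms(1) assms(5) assms(8)])
  have fdM: "\<forall>x\<in>Ob E. fin_dim sM (Val M x)"
  proof
    fix x assume x: "x \<in> Ob E"
    show "fin_dim sM (Val M x)"
      by (rule ext_fin_dim[OF assms(1,3,4,5,6) _ _ x]) (use Lp Np in blast)+
  qed
  have fsM: "fsupp E M"
    by (rule ext_fsupp[OF assms(1,2,3,4,5,6)]) (use Lp Np in blast)+
  interpret Mc: rm_ctx E sM M using assms(1,4) by unfold_locales
  have fs': "\<forall>y\<in>Ob E. \<forall>m\<in>Val M y. finite {x\<in>Ob E. \<exists>f\<in>Hom E x y. Act M x y f m \<noteq> 0}"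
    using fsM unfolding fsupp_def msupp_def .
  show ?thesis by (rule Mc.sufficient[OF fs' fdM])
qed

end
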